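(* Let $\mathcal{F}$ be a closure system on a finite set $X$ with closure operator $\phi$, let $\Sigma$ be the canonical direct basis of $\mathcal{F}$, let $A\in\mathcal{F}$ be meet-irreducible with unique upper cover $A^*$ in $\mathcal{F}$, and write $A^*\setminus A=\{d_1,\dots,d_k\}$. Let $Y_1,\dots,Y_t$ be the minimal (with respect to inclusion) transversals of the hypergraph $H=\langle A,\mathcal{T}\rangle$, where $\mathcal{T}=\{A\setminus Z: Z\in\mathcal{F},\ Z\subsetneq A\}$, and let $\Sigma_1=\{Y_j\rightarrow d_i: j\leq t,\ i\leq k\}$. Then $\Sigma\cup\Sigma_1$ is a direct basis of the closure system $\mathcal{F}^*=\mathcal{F}\setminus\{A\}$.
   Context: A closure system on $X$ is a family of subsets of $X$ containing $X$ and closed under intersections; its closure operator maps $Y$ to the smallest member containing $Y$. An implication $C\rightarrow d$ ($C\subseteq X$, $d\in X$) holds on $Y$ if $C\not\subseteq Y$ or $d\in Y$. A set $\Sigma$ of implications is a basis of a closure system $\mathcal{G}$ if $\mathcal{G}$ is exactly the family of subsets satisfying all implications of $\Sigma$; it is direct if moreover, with $\psi$ the closure operator of $\mathcal{G}$, $\psi(Y)=Y\cup\{d:(C\rightarrow d)\in\Sigma,\ C\subseteq Y\}$ for all $Y\subseteq X$. The canonical direct basis of $\mathcal{F}$ is the set of all $C\rightarrow d$ with $d\notin C$, $d\in\phi(C)$, and $d\notin\phi(C')$ for all $C'\subsetneq C$. $A\in\mathcal{F}$ is meet-irreducible if $A\neq X$ and $A$ has a unique upper cover in $\mathcal{F}$.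 A hypergraph is a pair $\langle B,\mathcal{B}\rangle$ with $\mathcal{B}\subseteq 2^B$; $U\subseteq B$ is a transversal if $U\cap V\neq\emptyset$ for every $V\in\mathcal{B}$. *)

theory Defs
  imports Main
begin

definition closure_system :: "'a set \<Rightarrow> 'a set set \<Rightarrow> bool" where
  "closure_system X F \<longleftrightarrow> F \<subseteq> Pow X \<and> X \<in> F \<and>
     (\<forall>S. S \<subseteq> F \<longrightarrow> S \<noteq> {} \<longrightarrow> \<Inter>S \<in> F)"

definition clo :: "'a set set \<Rightarrow> 'a set \<Rightarrow> 'a set" where
  "clo F Y = \<Inter>{Z \<in> F. Y \<subseteq> Z}"

type_synonym 'a impl = "'a set \<times> 'a"

definition holds :: "'a impl \<Rightarrow> 'a set \<Rightarrow> bool" where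
  "holds imp Y \<longleftrightarrow> \<not> fst imp \<subseteq> Y \<or> snd imp \<in> Y"

definition is_basis :: "'a set \<Rightarrow> 'a impl set \<Rightarrow> 'a set set \<Rightarrow> bool" where
  "is_basis X \<Sigma> G \<longleftrightarrow> G = {Y. Y \<subseteq> X \<and> (\<forall>imp\<in>\<Sigma>. holds imp Y)}"

definition is_direct_basis :: "'a set \<Rightarrow> 'a impl set \<Rightarrow> 'a set set \<Rightarrow> bool" where
  "is_direct_basis X \<Sigma> G \<longleftrightarrow> is_basis X \<Sigma> G \<and>
     (\<forall>Y. Y \<subseteq> X \<longrightarrow> clo G Y = Y \<union> {d. \<exists>C. (C, d) \<in> \<Sigma> \<and> C \<subseteq> Y})"

definition canonical_direct_basis :: "'a set \<Rightarrow> 'a set set \<Rightarrow> 'a impl set" where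
  "canonical_direct_basis X F =
     {(C, d). C \<subseteq> X \<and> d \<in> X \<and> d \<notin> C \<and> d \<in> clo F C \<and>
              (\<forall>C'. C' \<subset> C \<longrightarrow> d \<notin> clo F C')}"

definition upper_cover :: "'a set set \<Rightarrow> 'a set \<Rightarrow> 'a set \<Rightarrow> bool" where
  "upper_cover F A B \<longleftrightarrow> B \<in> F \<and> A \<subset> B \<and> \<not> (\<exists>Z\<in>F. A \<subset> Z \<and> Z \<subset> B)"

definition meet_irreducible :: "'a set \<Rightarrow> 'a set set \<Rightarrow> 'a set \<Rightarrow> bool" where
  "meet_irreducible X F A \<longleftrightarrow> A \<in> F \<and> A \<noteq> X \<and> (\<exists>!B. upper_cover F A B)"

definition transversal :: "'a set \<Rightarrow> 'a set set \<Rightarrow> 'a set \<Rightarrow> bool" where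
  "transversal B \<B> U \<longleftrightarrow> U \<subseteq> B \<and> (\<forall>V\<in>\<B>. U \<inter> V \<noteq> {})"

definition minimal_transversals :: "'a set \<Rightarrow> 'a set set \<Rightarrow> 'a set set" where
  "minimal_transversals B \<B> =
     {U. transversal B \<B> U \<and> (\<forall>U'. U' \<subset> U \<longrightarrow> \<not> transversal B \<B> U')}"

end

theory Submission
  imports Defs
begin

lemma clo_props:
  assumes cs: "closure_system X F" and Y: "Y \<subseteq> X"
  shows "clo F Y \<in> F" "Y \<subseteq> clo F Y" "\<And>Z. Z \<in> F \<Longrightarrow> Y \<subseteq> Z \<Longrightarrow> clo F Y \<subseteq> Z"
    "clo F Y \<subseteq> X"
proof -
  have X: "X \<in> F" and I: "\<And>S. S \<subseteq> F \<Longrightarrow> S \<noteq> {} \<Longrightarrow> \<Inter>S \<in> F"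
    using cs unfolding closure_system_def by auto
  have ne: "{Z \<in> F. Y \<subseteq> Z} \<noteq> {}" using X Y by auto
  show "clo F Y \<in> F" unfolding clo_def by (rule I) (use ne in auto)
  show "Y \<subseteq> clo F Y" unfolding clo_def by auto
  show "\<And>Z. Z \<in> F \<Longrightarrow> Y \<subseteq> Z \<Longrightarrow> clo F Y \<subseteq> Z" unfolding clo_def by auto
  show "clo F Y \<subseteq> X" unfolding clo_def using X Y by auto
qed

lemma min_subset:
  assumes "finite U" "P U"
  shows "\<exists>V\<subseteq>U. P V \<and> (\<forall>V'. V' \<subset> V \<longrightarrow> \<not> P V')"
proof -
  have f: "finite {V. V \<subseteq> U \<and> P V}" using assms(1) by auto
  obtain m where m: "m \<in> {V. V \<subseteq> U \<and> P V}" "\<forall>b\<in>{V. V \<subseteq> U \<and> P V}. b \<le> m \<longrightarrow> m = b"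
    using finite_has_minimal[OF f] assms(2) by blast
  show ?thesis using m by (intro exI[of _ m]) auto
qed

lemma canon_exists:
  assumes fin: "finite X" and cs: "closure_system X F" and Y: "Y \<subseteq> X"
    and d: "d \<in> clo F Y" "d \<notin> Y"
  shows "\<exists>C. (C, d) \<in> canonical_direct_basis X F \<and> C \<subseteq> Y"
proof -
  have "finite Y" using fin Y finite_subset by blast
  then obtain C where C: "C \<subseteq> Y" "d \<in> clo F C" "\<forall>C'. C' \<subset> C \<longrightarrow> d \<notin> clo F C'"
    using min_subset[of Y "\<lambda>C. d \<in> clo F C"] d by blast
  have "d \<in> X" using clo_props(4)[OF cs Y] d by blast
  have CX: "C \<subseteq> X" using C(1) Y by blast
  have dC: "d \<notin> C" using C(1) d(2) by blast
  have "(C, d) \<in> canonical_direct_basis X F"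
    unfolding canonical_direct_basis_def mem_Collect_eq case_prod_conv
    using CX \<open>d \<in> X\<close> dC C(2,3) by blast
  then show ?thesis using C(1) by blast
qed

lemma above_cover:
  assumes fin: "finite X" and cs: "closure_system X F"
    and mi: "meet_irreducible X F A" and uc: "upper_cover F A Astar"
    and Z: "Z \<in> F" "A \<subset> Z"
  shows "Astar \<subseteq> Z"
proof -
  have FX: "F \<subseteq> Pow X" using cs unfolding closure_system_def by auto
  have f: "finite {W \<in> F. A \<subset> W \<and> W \<subseteq> Z}"
    by (rule finite_subset[of _ "Pow X"]) (use FX fin in auto)
  obtain W where W: "W \<in> {W \<in> F. A \<subset> W \<and> W \<subseteq> Z}"
    "\<forall>b\<in>{W \<in> F. A \<subset> W \<and> W \<subseteq> Z}. b \<le> W \<longrightarrow> W = b"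
    using finite_has_minimal[OF f] Z by blast
  have W1: "W \<in> F" "A \<subset> W" "W \<subseteq> Z" using W(1) by auto
  have W2: "\<And>b. b \<in> F \<Longrightarrow> A \<subset> b \<Longrightarrow> b \<subseteq> Z \<Longrightarrow> b \<subseteq> W \<Longrightarrow> W = b"
    using W(2) by blast
  have "\<not> (\<exists>Z'\<in>F. A \<subset> Z' \<and> Z' \<subset> W)"
  proof
    assume "\<exists>Z'\<in>F. A \<subset> Z' \<and> Z' \<subset> W"
    then obtain Z' where "Z' \<in> F" "A \<subset> Z'" "Z' \<subset> W" by blast
    then show False using W2[of Z'] W1(3) by blast
  qed
  then have "upper_cover F A W" unfolding upper_cover_def using W1 by blast
  moreover have "\<exists>!B. upper_cover F A B" using mi unfolding meet_irreducible_def by auto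
  ultimately have "W = Astar" using uc by blast
  then show ?thesis using W by auto
qed

lemma transv_iff:
  "transversal A {A - Z | Z. Z \<in> F \<and> Z \<subset> A} U \<longleftrightarrow>
     U \<subseteq> A \<and> (\<forall>Z\<in>F. Z \<subset> A \<longrightarrow> \<not> U \<subseteq> Z)"
proof
  assume "transversal A {A - Z | Z. Z \<in> F \<and> Z \<subset> A} U"
  then have U: "U \<subseteq> A" and H: "\<And>V. V \<in> {A - Z | Z. Z \<in> F \<and> Z \<subset> A} \<Longrightarrow> U \<inter> V \<noteq> {}"
    unfolding transversal_def by auto
  show "U \<subseteq> A \<and> (\<forall>Z\<in>F. Z \<subset> A \<longrightarrow> \<not> U \<subseteq> Z)"
  proof (intro conjI ballI impI notI)
    show "U \<subseteq> A" by fact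
    fix Z assume Z: "Z \<in> F" "Z \<subset> A" "U \<subseteq> Z"
    have "A - Z \<in> {A - Z | Z. Z \<in> F \<and> Z \<subset> A}" using Z by blast
    then have "U \<inter> (A - Z) \<noteq> {}" by (rule H)
    then show False using Z(3) by blast
  qed
next
  assume R: "U \<subseteq> A \<and> (\<forall>Z\<in>F. Z \<subset> A \<longrightarrow> \<not> U \<subseteq> Z)"
  show "transversal A {A - Z | Z. Z \<in> F \<and> Z \<subset> A} U"
    unfolding transversal_def
  proof (intro conjI ballI)
    show "U \<subseteq> A" using R by blast
    fix V assume "V \<in> {A - Z | Z. Z \<in> F \<and> Z \<subset> A}"
    then obtain Z where Z: "V = A - Z" "Z \<in> F" "Z \<subset> A" by blast
    then have "\<not> U \<subseteq> Z" using R by blast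
    then show "U \<inter> V \<noteq> {}" using Z(1) R by blast
  qed
qed

theorem mainTheorem7:
  fixes X :: "'a set" and F :: "'a set set" and A Astar :: "'a set"
  assumes "finite X"
    and "closure_system X F"
    and "meet_irreducible X F A"
    and "upper_cover F A Astar"
  shows "is_direct_basis X
           (canonical_direct_basis X F \<union>
            {(Y, d). Y \<in> minimal_transversals A {A - Z | Z. Z \<in> F \<and> Z \<subset> A} \<and> d \<in> Astar - A})
           (F - {A})"
proof -
  note fin = assms(1) and cs = assms(2) and mi = assms(3) and uc = assms(4)
  define T where "T = {A - Z | Z. Z \<in> F \<and> Z \<subset> A}"
  define \<Sigma> where "\<Sigma> = canonical_direct_basis X F \<union>
            {(Y, d). Y \<in> minimal_transversals A T \<and> d \<in> Astar - A}"
  have FX: "F \<subseteq> Pow X" and XF: "X \<in> F" and I: "\<And>S. S \<subseteq> F \<Longrightarrow> S \<noteq> {} \<Longrightarrow> \<Inter>S \<in> F"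
    using cs unfolding closure_system_def by auto
  have AF: "A \<in> F" and AX: "A \<noteq> X" using mi unfolding meet_irreducible_def by auto
  have AsF: "Astar \<in> F" and AAs: "A \<subset> Astar" using uc unfolding upper_cover_def by auto
  have AsubX: "A \<subseteq> X" using AF FX by auto
  have finA: "finite A" using fin AsubX finite_subset by blast
  have above: "\<And>Z. Z \<in> F \<Longrightarrow> A \<subset> Z \<Longrightarrow> Astar \<subseteq> Z"
    using above_cover[OF fin cs mi uc] by blast
  have tr: "\<And>U. transversal A T U \<longleftrightarrow> U \<subseteq> A \<and> (\<forall>Z\<in>F. Z \<subset> A \<longrightarrow> \<not> U \<subseteq> Z)"
    unfolding T_def by (rule transv_iff)
  have mtr: "\<And>U. U \<subseteq> A \<Longrightarrow> transversal A T U \<Longrightarrow> \<exists>V\<subseteq>U. V \<in> minimal_transversals A T"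
  proof -
    fix U assume "U \<subseteq> A" "transversal A T U"
    then have "finite U" using finA finite_subset by blast
    then show "\<exists>V\<subseteq>U. V \<in> minimal_transversals A T"
      using min_subset[of U "transversal A T"] \<open>transversal A T U\<close>
      unfolding minimal_transversals_def by blast
  qed
  have mt_sub: "\<And>V. V \<in> minimal_transversals A T \<Longrightarrow> V \<subseteq> A"
    unfolding minimal_transversals_def transversal_def by blast
  have cs2: "closure_system X (F - {A})"
    unfolding closure_system_def
  proof (intro conjI allI impI)
    show "F - {A} \<subseteq> Pow X" using FX by auto
    show "X \<in> F - {A}" using XF AX by auto
    fix S assume S: "S \<subseteq> F - {A}" "S \<noteq> {}"
    have inF: "\<Inter>S \<in> F" using I S by auto
    have "\<Inter>S \<noteq> A"
    proof
      assume eq: "\<Inter>S = A"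
      have "\<And>Z. Z \<in> S \<Longrightarrow> Astar \<subseteq> Z"
      proof -
        fix Z assume "Z \<in> S"
        then have "Z \<in> F" "Z \<noteq> A" "A \<subseteq> Z" using S eq by auto
        then show "Astar \<subseteq> Z" using above by blast
      qed
      then have "Astar \<subseteq> \<Inter>S" by blast
      then show False using eq AAs by blast
    qed
    then show "\<Inter>S \<in> F - {A}" using inF by auto
  qed
  have basis: "F - {A} = {Y. Y \<subseteq> X \<and> (\<forall>imp\<in>\<Sigma>. holds imp Y)}"
  proof (intro set_eqI iffI)
    fix Y assume Y: "Y \<in> F - {A}"
    have YX: "Y \<subseteq> X" using Y FX by auto
    have "\<forall>imp\<in>\<Sigma>. holds imp Y"
    proof
      fix imp assume imp: "imp \<in> \<Sigma>"
      obtain C d where cd: "imp = (C, d)" by fastforce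
      show "holds imp Y"
      proof (cases "C \<subseteq> Y")
        case False then show ?thesis unfolding cd holds_def by auto
      next
        case True
        show ?thesis
        proof (cases "(C, d) \<in> canonical_direct_basis X F")
          case can: True
          then have "C \<subseteq> X" "d \<in> clo F C" unfolding canonical_direct_basis_def by auto
          then have "d \<in> Y" using clo_props(3)[OF cs \<open>C \<subseteq> X\<close>] Y True by blast
          then show ?thesis unfolding cd holds_def by auto
        next
          case False
          then have C: "C \<in> minimal_transversals A T" "d \<in> Astar - A"
            using imp cd unfolding \<Sigma>_def by auto
          have trC: "transversal A T C" using C unfolding minimal_transversals_def by auto
          have YA: "Y \<inter> A \<in> F" using I[of "{Y, A}"] Y AF by auto
          have "\<not> Y \<inter> A \<subset> A"
          proof
            assume "Y \<inter> A \<subset> A"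
            then have "\<not> C \<subseteq> Y \<inter> A" using tr trC YA by blast
            then show False using True trC tr by blast
          qed
          then have "A \<subset> Y" using Y by blast
          then have "Astar \<subseteq> Y" using above Y by blast
          then show ?thesis using C unfolding cd holds_def by auto
        qed
      qed
    qed
    then show "Y \<in> {Y. Y \<subseteq> X \<and> (\<forall>imp\<in>\<Sigma>. holds imp Y)}" using YX by auto
  next
    fix Y assume Y: "Y \<in> {Y. Y \<subseteq> X \<and> (\<forall>imp\<in>\<Sigma>. holds imp Y)}"
    then have YX: "Y \<subseteq> X" and H: "\<forall>imp\<in>\<Sigma>. holds imp Y" by auto
    have "clo F Y \<subseteq> Y"
    proof
      fix d assume d: "d \<in> clo F Y"
      show "d \<in> Y"
      proof (rule ccontr)
        assume "d \<notin> Y"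
        then obtain C where "(C, d) \<in> canonical_direct_basis X F" "C \<subseteq> Y"
          using canon_exists[OF fin cs YX d] by blast
        then show False using H \<open>d \<notin> Y\<close> unfolding \<Sigma>_def holds_def by force
      qed
    qed
    then have YF: "Y \<in> F" using clo_props(1,2)[OF cs YX] by (metis subset_antisym)
    have "Y \<noteq> A"
    proof
      assume YA: "Y = A"
      have "transversal A T A" using tr by blast
      then obtain V where V: "V \<subseteq> A" "V \<in> minimal_transversals A T" using mtr by blast
      obtain d where d: "d \<in> Astar - A" using AAs by blast
      have "(V, d) \<in> \<Sigma>" using V d unfolding \<Sigma>_def by auto
      then show False using H YA V d unfolding holds_def by force
    qed
    then show "Y \<in> F - {A}" using YF by auto
  qed
  have direct: "\<forall>Y. Y \<subseteq> X \<longrightarrow> clo (F - {A}) Y = Y \<union> {d. \<exists>C. (C, d) \<in> \<Sigma> \<and> C \<subseteq> Y}"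
  proof (intro allI impI)
    fix Y assume YX: "Y \<subseteq> X"
    define R where "R = Y \<union> {d. \<exists>C. (C, d) \<in> \<Sigma> \<and> C \<subseteq> Y}"
    have c2: "clo (F - {A}) Y \<in> F - {A}" "Y \<subseteq> clo (F - {A}) Y"
      using clo_props[OF cs2 YX] by auto
    have hc: "\<forall>imp\<in>\<Sigma>. holds imp (clo (F - {A}) Y)" using c2(1) basis by blast
    have R1: "R \<subseteq> clo (F - {A}) Y"
    proof
      fix d assume "d \<in> R"
      then consider "d \<in> Y" | C where "(C, d) \<in> \<Sigma>" "C \<subseteq> Y" unfolding R_def by auto
      then show "d \<in> clo (F - {A}) Y"
      proof cases
        case 1 then show ?thesis using c2 by auto
      next
        case 2 then show ?thesis using hc c2(2) unfolding holds_def by force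
      qed
    qed
    have WR: "clo F Y \<subseteq> R"
    proof
      fix d assume d: "d \<in> clo F Y"
      show "d \<in> R"
      proof (cases "d \<in> Y")
        case True then show ?thesis unfolding R_def by auto
      next
        case False
        then obtain C where "(C, d) \<in> canonical_direct_basis X F" "C \<subseteq> Y"
          using canon_exists[OF fin cs YX d] by blast
        then show ?thesis unfolding R_def \<Sigma>_def by auto
      qed
    qed
    have R2: "clo (F - {A}) Y \<subseteq> R"
    proof (cases "clo F Y = A")
      case False
      then have "clo F Y \<in> F - {A}" using clo_props(1)[OF cs YX] by auto
      then have "clo (F - {A}) Y \<subseteq> clo F Y"
        using clo_props(3)[OF cs2 YX] clo_props(2)[OF cs YX] by blast
      then show ?thesis using WR by blast
    next
      case True
      have "Astar \<in> F - {A}" using AsF AAs by auto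
      moreover have "Y \<subseteq> Astar" using True clo_props(2)[OF cs YX] AAs by blast
      ultimately have "clo (F - {A}) Y \<subseteq> Astar" using clo_props(3)[OF cs2 YX] by blast
      moreover have "Astar \<subseteq> R"
      proof
        fix d assume d: "d \<in> Astar"
        show "d \<in> R"
        proof (cases "d \<in> A")
          case True then show ?thesis using WR \<open>clo F Y = A\<close> by blast
        next
          case False
          have YA: "Y \<subseteq> A" using True clo_props(2)[OF cs YX] by blast
          have "transversal A T Y"
            unfolding tr
          proof (intro conjI ballI impI)
            show "Y \<subseteq> A" by fact
            fix Z assume "Z \<in> F" "Z \<subset> A"
            show "\<not> Y \<subseteq> Z"
            proof
              assume "Y \<subseteq> Z"
              then have "clo F Y \<subseteq> Z" using clo_props(3)[OF cs YX] \<open>Z \<in> F\<close> by blast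
              then show False using True \<open>Z \<subset> A\<close> by blast
            qed
          qed
          then obtain V where V: "V \<subseteq> Y" "V \<in> minimal_transversals A T" using mtr YA by blast
          have "(V, d) \<in> \<Sigma>" using V d False unfolding \<Sigma>_def by auto
          then show ?thesis using V unfolding R_def by blast
        qed
      qed
      ultimately show ?thesis by blast
    qed
    show "clo (F - {A}) Y = Y \<union> {d. \<exists>C. (C, d) \<in> \<Sigma> \<and> C \<subseteq> Y}"
      using subset_antisym[OF R2 R1] unfolding R_def .
  qed
  have "is_direct_basis X \<Sigma> (F - {A})"
    unfolding is_direct_basis_def is_basis_def using basis direct by blast
  then show ?thesis unfolding \<Sigma>_def T_def .
qed

end
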